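(* Let $m,n\in\mathbb{N}$, $0<\ell\le\infty$, let $J$ be an $m\times m$ matrix with $J^*=-J$, and $H_1(x)\ge0$, $H_0(x)=H_0(x)^*$ be $m\times m$ matrix functions locally summable on $[0,\ell)$. Let $A$, $S(0)>0$ be $n\times n$ and $\Pi(0)$ be $n\times m$ matrices with $AS(0)-S(0)A^*=\Pi(0)J\Pi(0)^*$, and define $\Pi(x),S(x)$ by $\Pi'=-A\Pi JH_1-\Pi JH_0$, $S'=\Pi JH_1J^*\Pi^*$. For $h\in\mathbb{C}^n$ let $\widetilde z(x,t)=J\Pi(x)^*S(x)^{-1}\mathrm{e}^{-tA}h$, and for $0<a<\ell$ define $E_{\widetilde z}(t)\ge0$ by $E_{\widetilde z}(t)^2=\int_0^a\widetilde z(x,t)^*H_1(x)\widetilde z(x,t)\,dx$. Then $$E_{\widetilde z}(t)=\sqrt{h^*\mathrm{e}^{-tA^*}\big(S(0)^{-1}-S(a)^{-1}\big)\mathrm{e}^{-tA}h}.$$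
   Context: $E_{\widetilde z}(t)$ is called the energy on $[0,a]$ of the solution $\widetilde z$ of the transformed dynamical system $\partial_x\widetilde z=J(-H_1\partial_t\widetilde z+\widetilde H_0\widetilde z)$, $\widetilde H_0=H_0-X^*H_1-H_1X$, $X=J\Pi^*S^{-1}\Pi$. $S>0$ means positive definite. *)

theory Defs
  imports "HOL-Analysis.Analysis"
begin

definition adjoint_mat :: "complex^'n^'m \<Rightarrow> complex^'m^'n" where
  "adjoint_mat M = (\<chi> i j. cnj (M $ j $ i))"

definition cdot :: "complex^'n \<Rightarrow> complex^'n \<Rightarrow> complex" where
  "cdot u v = (\<Sum>i\<in>UNIV. cnj (u $ i) * v $ i)"

definition hermitian_mat :: "complex^'n^'n \<Rightarrow> bool" where
  "hermitian_mat M \<longleftrightarrow> adjoint_mat M = M"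

definition psd_mat :: "complex^'n^'n \<Rightarrow> bool" where
  "psd_mat M \<longleftrightarrow> hermitian_mat M \<and> (\<forall>h. Re (cdot h (M *v h)) \<ge> 0 \<and> Im (cdot h (M *v h)) = 0)"

definition pd_mat :: "complex^'n^'n \<Rightarrow> bool" where
  "pd_mat M \<longleftrightarrow> hermitian_mat M \<and> (\<forall>h. h \<noteq> 0 \<longrightarrow> Re (cdot h (M *v h)) > 0 \<and> Im (cdot h (M *v h)) = 0)"

primrec mat_pow :: "complex^'n^'n \<Rightarrow> nat \<Rightarrow> complex^'n^'n" where
  "mat_pow M 0 = mat 1"
| "mat_pow M (Suc k) = M ** mat_pow M k"

definition mat_exp :: "complex^'n^'n \<Rightarrow> complex^'n^'n" where
  "mat_exp M = (\<Sum>k. (1 / fact k :: real) *\<^sub>R mat_pow M k)"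

end

theory Submission
  imports Defs
begin

lemma adj_nth: "adjoint_mat M $ i $ j = cnj (M $ j $ i)"
  by (simp add: adjoint_mat_def)

lemma adj_adj[simp]: "adjoint_mat (adjoint_mat M) = M"
  by (simp add: adjoint_mat_def vec_eq_iff)

lemma adj_mult: "adjoint_mat (X ** Y) = adjoint_mat Y ** adjoint_mat X"
  by (simp add: adjoint_mat_def matrix_matrix_mult_def vec_eq_iff mult.commute)

lemma adj_mat1[simp]: "adjoint_mat (mat 1 :: complex^'n^'n) = mat 1"
  by (simp add: adjoint_mat_def mat_def vec_eq_iff)

lemma adj_add: "adjoint_mat (X + Y) = adjoint_mat X + adjoint_mat Y"
  by (simp add: adjoint_mat_def vec_eq_iff)

lemma adj_diff: "adjoint_mat (X - Y) = adjoint_mat X - adjoint_mat Y"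
  by (simp add: adjoint_mat_def vec_eq_iff)

lemma adj_minus: "adjoint_mat (- X) = - adjoint_mat X"
  by (simp add: adjoint_mat_def vec_eq_iff)

lemma adj_scaleR: "adjoint_mat (r *\<^sub>R X) = r *\<^sub>R adjoint_mat X"
  by (simp add: adjoint_mat_def vec_eq_iff vector_scaleR_component)

lemma cdot_adj: "cdot u (adjoint_mat M *v w) = cdot (M *v u) w"
  unfolding cdot_def adjoint_mat_def matrix_vector_mult_def
  apply (simp add: sum_distrib_left sum_distrib_right mult_ac)
  apply (rule sum.swap)
  done

lemma cdot_adj': "cdot (adjoint_mat M *v u) w = cdot u (M *v w)"
  using cdot_adj[of u "adjoint_mat M" w] by simp

lemma linear_adj: "linear (adjoint_mat :: complex^'n^'m \<Rightarrow> complex^'m^'n)"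
  by (rule linearI) (simp_all add: adj_add adj_scaleR)

lemma bounded_linear_adj: "bounded_linear (adjoint_mat :: complex^'n^'m \<Rightarrow> complex^'m^'n)"
  using linear_adj linear_conv_bounded_linear by blast

definition outer :: "complex^'n \<Rightarrow> complex^'n \<Rightarrow> complex^'n^'n" where
  "outer p q = (\<chi> k l. cnj (p $ k) * q $ l)"

definition pairing :: "complex^'n^'n \<Rightarrow> complex^'n^'n \<Rightarrow> complex" where
  "pairing C M = (\<Sum>k\<in>UNIV. \<Sum>l\<in>UNIV. C $ k $ l * M $ k $ l)"

lemma cdot_pairing: "cdot p (M *v q) = pairing (outer p q) M"
  by (simp add: cdot_def pairing_def outer_def matrix_vector_mult_def sum_distrib_left mult_ac)

lemma bilinear_pairing: "bilinear pairing"
  unfolding bilinear_def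
  apply (auto intro!: linearI simp: pairing_def algebra_simps sum.distrib vector_scaleR_component sum_distrib_left)
  by (simp_all add: scaleR_conv_of_real algebra_simps sum_distrib_left)

lemma bilinear_outer: "bilinear outer"
  unfolding bilinear_def
  by (auto intro!: linearI simp: outer_def vec_eq_iff algebra_simps vector_scaleR_component)

lemma bilinear_cdot: "bilinear cdot"
  unfolding bilinear_def
  apply (auto intro!: linearI simp: cdot_def algebra_simps sum.distrib vector_scaleR_component sum_distrib_left)
  by (simp_all add: scaleR_conv_of_real algebra_simps sum_distrib_left)

lemma bilinear_mv: "bilinear ((*v) :: complex^'n^'m \<Rightarrow> complex^'n \<Rightarrow> complex^'m)"
  unfolding bilinear_def
  apply (auto intro!: linearI simp: matrix_vector_mult_def vec_eq_iff algebra_simps sum.distrib vector_scaleR_component sum_distrib_left)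
  by (simp_all add: scaleR_conv_of_real algebra_simps sum_distrib_left)

lemma bilinear_mm: "bilinear ((**) :: complex^'n^'m \<Rightarrow> complex^'k^'n \<Rightarrow> complex^'k^'m)"
  unfolding bilinear_def
  apply (auto intro!: linearI simp: matrix_matrix_mult_def vec_eq_iff algebra_simps sum.distrib vector_scaleR_component sum_distrib_left)
  by (simp_all add: scaleR_conv_of_real algebra_simps sum_distrib_left)

lemma mat_pow_commute: "mat_pow M k ** M = M ** mat_pow M k"
proof (induction k)
  case (Suc k)
  have "mat_pow M (Suc k) ** M = M ** (mat_pow M k ** M)"
    by (simp add: matrix_mul_assoc)
  also have "\<dots> = M ** (M ** mat_pow M k)" by (simp only: Suc.IH)
  finally show ?case by simp
qed simp

lemma adj_mat_pow: "adjoint_mat (mat_pow M k) = mat_pow (adjoint_mat M) k"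
proof (induction k)
  case 0 then show ?case by simp
next
  case (Suc k)
  have "adjoint_mat (mat_pow M (Suc k)) = adjoint_mat (mat_pow M k ** M)"
    by (simp add: mat_pow_commute)
  also have "\<dots> = adjoint_mat M ** mat_pow (adjoint_mat M) k"
    by (simp add: adj_mult Suc)
  finally show ?case by simp
qed

lemma mat_pow_entry_bound:
  fixes M :: "complex^'n^'n"
  defines "B \<equiv> 1 + (\<Sum>i\<in>UNIV. \<Sum>j\<in>UNIV. norm (M $ i $ j))"
  shows "norm (mat_pow M k $ i $ j) \<le> B ^ k"
proof (induction k arbitrary: i j)
  case 0
  then show ?case by (simp add: mat_def)
next
  case (Suc k)
  have B1: "(\<Sum>l\<in>UNIV. norm (M $ i $ l)) \<le> B"
  proof -
    have "(\<Sum>l\<in>UNIV. norm (M $ i $ l)) \<le> (\<Sum>i\<in>UNIV. \<Sum>j\<in>UNIV. norm (M $ i $ j))"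
      by (rule member_le_sum[where f="\<lambda>i. \<Sum>j\<in>UNIV. norm (M $ i $ j)"]) (auto intro: sum_nonneg)
    then show ?thesis unfolding B_def by simp
  qed
  have "norm (mat_pow M (Suc k) $ i $ j) = norm (\<Sum>l\<in>UNIV. M $ i $ l * mat_pow M k $ l $ j)"
    by (simp add: matrix_matrix_mult_def)
  also have "\<dots> \<le> (\<Sum>l\<in>UNIV. norm (M $ i $ l) * B ^ k)"
    by (rule order_trans[OF norm_sum sum_mono]) (simp add: norm_mult mult_left_mono Suc)
  also have "\<dots> = (\<Sum>l\<in>UNIV. norm (M $ i $ l)) * B ^ k"
    by (simp add: sum_distrib_right)
  also have "\<dots> \<le> B * B ^ k"
    by (rule mult_right_mono[OF B1]) (simp add: B_def sum_nonneg)
  finally show ?case by simp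
qed

lemma norm_vec_le_sum: "norm (x :: 'a::real_normed_vector^'n) \<le> (\<Sum>i\<in>UNIV. norm (x $ i))"
  unfolding norm_vec_def by (rule L2_set_le_sum) simp

lemma summable_mat_exp: "summable (\<lambda>k. (1 / fact k :: real) *\<^sub>R mat_pow (M :: complex^'n^'n) k)"
proof -
  define B where "B = 1 + (\<Sum>i\<in>UNIV. \<Sum>j\<in>UNIV. norm (M $ i $ j))"
  define C where "C = real (CARD('n)) * real (CARD('n))"
  have nb: "norm (mat_pow M k) \<le> C * B ^ k" for k
  proof -
    have "norm (mat_pow M k) \<le> (\<Sum>i\<in>UNIV. norm (mat_pow M k $ i))" by (rule norm_vec_le_sum)
    also have "\<dots> \<le> (\<Sum>i\<in>UNIV. \<Sum>j\<in>UNIV. norm (mat_pow M k $ i $ j))"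
      by (rule sum_mono) (rule norm_vec_le_sum)
    also have "\<dots> \<le> (\<Sum>i\<in>(UNIV::'n set). \<Sum>j\<in>(UNIV::'n set). B ^ k)"
      by (intro sum_mono) (simp add: B_def mat_pow_entry_bound)
    also have "\<dots> = C * B ^ k" by (simp add: C_def)
    finally show ?thesis .
  qed
  have "summable (\<lambda>k. C * (inverse (fact k) * B ^ k))"
    by (intro summable_mult summable_exp)
  then show ?thesis
  proof (rule summable_comparison_test')
    fix k :: nat
    have "norm ((1 / fact k :: real) *\<^sub>R mat_pow M k) = (1 / fact k) * norm (mat_pow M k)"
      by simp
    also have "\<dots> \<le> (1 / fact k) * (C * B ^ k)"
      by (rule mult_left_mono[OF nb]) simp
    finally show "norm ((1 / fact k :: real) *\<^sub>R mat_pow M k) \<le> C * (inverse (fact k) * B ^ k)"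
      by (simp add: field_simps)
  qed
qed

lemma adj_mat_exp: "adjoint_mat (mat_exp M) = mat_exp (adjoint_mat (M :: complex^'n^'n))"
proof -
  have "adjoint_mat (mat_exp M) = (\<Sum>k. adjoint_mat ((1 / fact k :: real) *\<^sub>R mat_pow M k))"
    unfolding mat_exp_def by (rule bounded_linear.suminf[OF bounded_linear_adj summable_mat_exp])
  also have "\<dots> = mat_exp (adjoint_mat M)"
    unfolding mat_exp_def adj_scaleR adj_mat_pow ..
  finally show ?thesis .
qed

lemma inv_props:
  assumes "invertible (X :: 'a::semiring_1^'n^'n)"
  shows "X ** matrix_inv X = mat 1" "matrix_inv X ** X = mat 1"
proof -
  have "\<exists>A'. X ** A' = mat 1 \<and> A' ** X = mat 1" using assms unfolding invertible_def by blast
  then have "X ** matrix_inv X = mat 1 \<and> matrix_inv X ** X = mat 1"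
    unfolding matrix_inv_def by (rule someI_ex)
  then show "X ** matrix_inv X = mat 1" "matrix_inv X ** X = mat 1" by auto
qed

lemma invertible_if_ker:
  fixes X :: "complex^'n^'n"
  assumes "\<And>u. X *v u = 0 \<Longrightarrow> u = 0"
  shows "invertible X"
  using assms invertible_left_inverse matrix_left_invertible_ker by blast

lemma cdot_scaleR_both: "cdot (r *\<^sub>R u) (M *v (r *\<^sub>R u)) = (r^2) *\<^sub>R cdot u (M *v u)"
  unfolding cdot_def matrix_vector_mult_def
  apply (simp add: vector_scaleR_component)
  apply (simp add: scaleR_conv_of_real sum_distrib_left mult_ac power2_eq_square)
  done

lemma coercive:
  fixes S0 :: "complex^'n^'n"
  assumes "pd_mat S0"
  shows "\<exists>c>0. \<forall>u. c * (norm u)^2 \<le> Re (cdot u (S0 *v u))"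
proof -
  define q where "q u = Re (cdot u (S0 *v u))" for u :: "complex^'n"
  have cq: "continuous_on UNIV q"
    unfolding q_def
    by (intro continuous_intros bilinear_continuous_on_compose[OF _ _ bilinear_cdot]
        bilinear_continuous_on_compose[OF _ _ bilinear_mv])
  have ne: "sphere (0::complex^'n) 1 \<noteq> {}"
    using vector_choose_size[of 1] by (auto simp: sphere_def)
  obtain u0 where u0: "u0 \<in> sphere 0 1" "\<And>y. y \<in> sphere 0 1 \<Longrightarrow> q u0 \<le> q y"
    using continuous_attains_inf[OF compact_sphere ne continuous_on_subset[OF cq]] by blast
  have "u0 \<noteq> 0" using u0(1) by auto
  then have c: "q u0 > 0" using assms unfolding pd_mat_def q_def by auto
  show ?thesis
  proof (intro exI[of _ "q u0"] conjI allI c)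
    fix u :: "complex^'n"
    show "q u0 * (norm u)^2 \<le> Re (cdot u (S0 *v u))"
    proof (cases "u = 0")
      case True then show ?thesis by (simp add: cdot_def)
    next
      case False
      define e where "e = (1 / norm u) *\<^sub>R u"
      have "e \<in> sphere 0 1" using False by (simp add: e_def)
      then have "q u0 \<le> q e" by (rule u0(2))
      moreover have "u = norm u *\<^sub>R e" using False by (simp add: e_def)
      then have "q u = (norm u)^2 * q e"
        unfolding q_def by (metis cdot_scaleR_both scaleR_complex.sel(1))
      ultimately show ?thesis unfolding q_def[symmetric]
        by (simp add: mult.commute mult_right_mono)
    qed
  qed
qed

lemma bl_pairing: "bounded_linear (pairing C)"
  using bilinear_pairing unfolding bilinear_def linear_conv_bounded_linear
  by blast

lemma bl_quad: "bounded_linear (\<lambda>M. Re (cdot u (M *v u)))"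
  unfolding cdot_pairing
  by (rule bounded_linear_compose[OF bounded_linear_Re bl_pairing])

lemma cdot_madd: "cdot u ((X + Y) *v w) = cdot u (X *v w) + cdot u (Y *v w)"
  by (simp add: cdot_def matrix_vector_mult_add_rdistrib sum.distrib algebra_simps)

lemma core_part1:
  fixes F S :: "real \<Rightarrow> complex^'n^'n" and v :: "complex^'n" and a :: real
  assumes a: "0 \<le> a"
    and Fint: "F absolutely_integrable_on {0..a}"
    and Shas: "\<And>x. x \<in> {0..a} \<Longrightarrow> (F has_integral (S x - S 0)) {0..x}"
    and Fpsd: "\<And>y u. y \<in> {0..a} \<Longrightarrow> 0 \<le> Re (cdot u (F y *v u))"
    and Fherm: "\<And>y. y \<in> {0..a} \<Longrightarrow> adjoint_mat (F y) = F y"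
    and S0: "pd_mat (S 0)"
  shows "\<exists>K. \<forall>x\<in>{0..a}. invertible (S x) \<and> adjoint_mat (S x) = S x \<and>
            adjoint_mat (matrix_inv (S x)) = matrix_inv (S x) \<and>
            (\<forall>q. norm (matrix_inv (S x) *v q) \<le> K * norm q)"
proof -
  have psdS: "0 \<le> Re (cdot u ((S x - S 0) *v u))" if x: "x \<in> {0..a}" for x u
  proof -
    have "((\<lambda>y. Re (cdot u (F y *v u))) has_integral Re (cdot u ((S x - S 0) *v u))) {0..x}"
      using has_integral_linear[OF Shas[OF x] bl_quad[of u]] by (simp add: o_def)
    then show ?thesis
      by (rule has_integral_nonneg) (use x in \<open>auto intro!: Fpsd\<close>)
  qed
  obtain c where c: "c > 0" "\<And>u. c * (norm u)^2 \<le> Re (cdot u (S 0 *v u))"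
    using coercive[OF S0] by blast
  have coer: "c * (norm u)^2 \<le> Re (cdot u (S x *v u))" if x: "x \<in> {0..a}" for x u
  proof -
    have "S x = S 0 + (S x - S 0)" by simp
    then have "cdot u (S x *v u) = cdot u (S 0 *v u) + cdot u ((S x - S 0) *v u)"
      by (metis cdot_madd)
    then show ?thesis using c(2)[of u] psdS[OF x, of u] by simp
  qed
  have inv: "invertible (S x)" if x: "x \<in> {0..a}" for x
  proof (rule invertible_if_ker)
    fix u assume "S x *v u = 0"
    then have "c * (norm u)^2 \<le> 0" using coer[OF x, of u] by (simp add: cdot_def)
    then show "u = 0" using c(1)
      by (metis mult_pos_pos norm_eq_zero not_le zero_less_norm_iff zero_less_power)
  qed
  have hS: "adjoint_mat (S x) = S x" if x: "x \<in> {0..a}" for x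
  proof -
    have "((adjoint_mat \<circ> F) has_integral adjoint_mat (S x - S 0)) {0..x}"
      by (rule has_integral_linear[OF Shas[OF x] bounded_linear_adj])
    moreover have "\<And>y. y \<in> {0..x} \<Longrightarrow> (adjoint_mat \<circ> F) y = F y"
      using x Fherm by auto
    ultimately have "(F has_integral adjoint_mat (S x - S 0)) {0..x}"
      using has_integral_eq by metis
    then have "adjoint_mat (S x - S 0) = S x - S 0"
      using Shas[OF x] has_integral_unique by blast
    moreover have "adjoint_mat (S 0) = S 0" using S0 unfolding pd_mat_def hermitian_mat_def by simp
    ultimately show ?thesis by (simp add: adj_diff)
  qed
  have hG: "adjoint_mat (matrix_inv (S x)) = matrix_inv (S x)" if x: "x \<in> {0..a}" for x
  proof -
    define G where "G = matrix_inv (S x)"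
    have SG: "S x ** G = mat 1" "G ** S x = mat 1" using inv_props[OF inv[OF x]] by (simp_all add: G_def)
    have "adjoint_mat G ** S x = mat 1"
      using arg_cong[OF SG(1), of adjoint_mat] hS[OF x] by (simp add: adj_mult)
    have "adjoint_mat G = (adjoint_mat G ** S x) ** G"
      by (simp add: SG(1) flip: matrix_mul_assoc)
    then show ?thesis unfolding G_def[symmetric] using \<open>adjoint_mat G ** S x = mat 1\<close>
      by (metis matrix_mul_lid)
  qed
  obtain Bc where Bc: "Bc > 0" "\<And>p q :: complex^'n. norm (cdot p q) \<le> Bc * norm p * norm q"
    using bilinear_bounded_pos[OF bilinear_cdot] by blast
  have Gb: "norm (matrix_inv (S x) *v q) \<le> (Bc / c) * norm q" if x: "x \<in> {0..a}" for x q
  proof -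
    define u where "u = matrix_inv (S x) *v q"
    have "S x *v u = q" unfolding u_def matrix_vector_mul_assoc inv_props[OF inv[OF x]] by simp
    then have "c * (norm u)^2 \<le> Re (cdot u q)" using coer[OF x, of u] by simp
    also have "\<dots> \<le> norm (cdot u q)" by (rule complex_Re_le_cmod)
    also have "\<dots> \<le> Bc * norm u * norm q" by (rule Bc(2))
    finally have *: "c * (norm u)^2 \<le> Bc * norm u * norm q" .
    show ?thesis
    proof (cases "u = 0")
      case True then show ?thesis using Bc c by (simp add: u_def[symmetric])
    next
      case False
      then have "c * norm u \<le> Bc * norm q" using *
        by (simp add: power2_eq_square mult_ac)
      then show ?thesis using c(1) unfolding u_def[symmetric]
        by (simp add: field_simps mult.commute)
    qed
  qed
  show ?thesis using inv hS hG Gb by blast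
qed

lemma core:
  fixes F S :: "real \<Rightarrow> complex^'n^'n" and v :: "complex^'n" and a :: real
  assumes a: "0 \<le> a"
    and Fint: "F absolutely_integrable_on {0..a}"
    and Shas: "\<And>x. x \<in> {0..a} \<Longrightarrow> (F has_integral (S x - S 0)) {0..x}"
    and Fpsd: "\<And>y u. y \<in> {0..a} \<Longrightarrow> 0 \<le> Re (cdot u (F y *v u))"
    and Fherm: "\<And>y. y \<in> {0..a} \<Longrightarrow> adjoint_mat (F y) = F y"
    and S0: "pd_mat (S 0)"
  shows "((\<lambda>y. cdot (matrix_inv (S y) *v v) (F y *v (matrix_inv (S y) *v v))) has_integral
          cdot v ((matrix_inv (S 0) - matrix_inv (S a)) *v v)) {0..a}"
proof -
  obtain K0 where K0: "\<forall>x\<in>{0..a}. invertible (S x) \<and> adjoint_mat (S x) = S x \<and>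
            adjoint_mat (matrix_inv (S x)) = matrix_inv (S x) \<and>
            (\<forall>q. norm (matrix_inv (S x) *v q) \<le> K0 * norm q)"
    using core_part1[OF assms] by blast
  define K where "K = max K0 0"
  have K: "K \<ge> 0" by (simp add: K_def)
  define G where "G x = matrix_inv (S x)" for x
  define w where "w y = G y *v v" for y
  have inv: "S x ** G x = mat 1" "G x ** S x = mat 1" if "x \<in> {0..a}" for x
    using inv_props[of "S x"] K0 that by (auto simp: G_def)
  have hG: "adjoint_mat (G x) = G x" if "x \<in> {0..a}" for x
    using K0 that by (auto simp: G_def)
  have Gb: "norm (G x *v q) \<le> K * norm q" if "x \<in> {0..a}" for x q
  proof -
    have "norm (G x *v q) \<le> K0 * norm q" using K0 that by (auto simp: G_def)
    also have "\<dots> \<le> K * norm q" by (simp add: K_def mult_right_mono)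
    finally show ?thesis .
  qed
  have Fi: "F integrable_on {0..a}" and Fn: "(\<lambda>y. norm (F y)) integrable_on {0..a}"
    using Fint unfolding absolutely_integrable_on_def by auto
  have Sint: "S x = S 0 + integral {0..x} F" if "x \<in> {0..a}" for x
    using Shas[OF that] by (simp add: integral_unique)
  have Scont: "continuous_on {0..a} S"
  proof (rule continuous_on_eq)
    show "continuous_on {0..a} (\<lambda>x. S 0 + integral {0..x} F)"
      by (intro continuous_intros indefinite_integral_continuous_1[OF Fi])
  qed (metis Sint)
  have uc: "uniformly_continuous_on {0..a} S"
    by (rule compact_uniformly_continuous[OF Scont compact_Icc])
  obtain Bm where Bm: "Bm > 0" "\<And>(M :: complex^'n^'n) q. norm (M *v q) \<le> Bm * norm M * norm q"
    using bilinear_bounded_pos[OF bilinear_mv] by blast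
  define L where "L = K * Bm * K * norm v"
  have L: "L \<ge> 0" using K Bm by (simp add: L_def)
  have Lip: "norm (w x - w y) \<le> L * norm (S y - S x)" if x: "x \<in> {0..a}" and y: "y \<in> {0..a}" for x y
  proof -
    have "G x ** (S y - S x) ** G y = G x ** S y ** G y - G x ** S x ** G y"
      by (simp only: bilinear_rsub[OF bilinear_mm] bilinear_lsub[OF bilinear_mm])
    also have "\<dots> = G x - G y"
      using inv[OF x] inv[OF y] by (simp flip: matrix_mul_assoc)
    finally have eq: "w x - w y = G x *v ((S y - S x) *v w y)"
      by (simp add: w_def matrix_vector_mul_assoc matrix_vector_mult_diff_rdistrib matrix_mul_assoc)
    have "norm (G x *v ((S y - S x) *v w y)) \<le> K * norm ((S y - S x) *v w y)" by (rule Gb[OF x])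
    also have "\<dots> \<le> K * (Bm * norm (S y - S x) * norm (w y))"
      by (rule mult_left_mono[OF Bm(2) K])
    also have "\<dots> \<le> K * (Bm * norm (S y - S x) * (K * norm v))"
      using Gb[OF y, of v] K Bm(1) by (intro mult_left_mono) (auto simp: w_def)
    also have "\<dots> = L * norm (S y - S x)" by (simp add: L_def mult_ac)
    finally show ?thesis using eq by simp
  qed
  have wuc: "\<exists>d>0. \<forall>x\<in>{0..a}. \<forall>y\<in>{0..a}. \<bar>x - y\<bar> < d \<longrightarrow> norm (w x - w y) \<le> e" if e: "e > 0" for e
  proof -
    have "e / (L + 1) > 0" using e L by simp
    then obtain d where d: "d > 0" "\<And>x y. x \<in> {0..a} \<Longrightarrow> y \<in> {0..a} \<Longrightarrow> dist y x < d \<Longrightarrow> dist (S y) (S x) < e / (L + 1)"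
      using uc unfolding uniformly_continuous_on_def by metis
    show ?thesis
    proof (intro exI[of _ d] conjI ballI impI d(1))
      fix x y assume x: "x \<in> {0..a}" and y: "y \<in> {0..a}" and xy: "\<bar>x - y\<bar> < d"
      have "norm (S y - S x) < e / (L + 1)" using d(2)[OF x y] xy by (simp add: dist_norm abs_minus_commute)
      then have "L * norm (S y - S x) \<le> L * (e / (L + 1))" using L by (intro mult_left_mono) auto
      also have "\<dots> \<le> e" using L e by (simp add: field_simps)
      finally show "norm (w x - w y) \<le> e" using Lip[OF x y] by simp
    qed
  qed
  have cw: "continuous_on {0..a} w"
  proof (rule uniformly_continuous_imp_continuous)
    show "uniformly_continuous_on {0..a} w"
      unfolding uniformly_continuous_on_def
    proof (intro allI impI)
      fix e :: real assume "e > 0"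
      then obtain d where "d > 0" "\<forall>x\<in>{0..a}. \<forall>y\<in>{0..a}. \<bar>x - y\<bar> < d \<longrightarrow> norm (w x - w y) \<le> e / 2"
        using wuc[of "e/2"] by auto
      then show "\<exists>d>0. \<forall>x\<in>{0..a}. \<forall>x'\<in>{0..a}. dist x' x < d \<longrightarrow> dist (w x') (w x) < e"
        using \<open>e > 0\<close> by (intro exI[of _ d]) (auto simp: dist_norm, fastforce)
    qed
  qed
  have Wb: "norm (w y) \<le> K * norm v" if "y \<in> {0..a}" for y
    using Gb[OF that] by (simp add: w_def)
  have cO: "continuous_on {0..a} (\<lambda>y. outer (w y) (w y))"
    by (rule bilinear_continuous_on_compose[OF cw cw bilinear_outer])
  have phi_ai: "(\<lambda>y. pairing (outer (w y) (w y)) (F y)) absolutely_integrable_on {0..a}"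
    by (rule absolutely_integrable_bounded_measurable_product[OF bilinear_pairing
          continuous_imp_measurable_on_sets_lebesgue[OF cO] _
          compact_imp_bounded[OF compact_continuous_image[OF cO compact_Icc]] Fint]) auto
  define phi where "phi y = pairing (outer (w y) (w y)) (F y)" for y
  have phii: "phi integrable_on {c..d}" if "0 \<le> c" "d \<le> a" for c d
  proof -
    have "phi integrable_on {0..a}" using phi_ai unfolding absolutely_integrable_on_def phi_def by auto
    then show ?thesis using integrable_subinterval_real[of phi 0 a c d] that by auto
  qed
  have Fsub: "F integrable_on {c..d}" if "0 \<le> c" "d \<le> a" for c d
    using integrable_subinterval_real[OF Fi, of c d] that by auto
  have Fnsub: "(\<lambda>y. norm (F y)) integrable_on {c..d}" if "0 \<le> c" "d \<le> a" for c d
    using integrable_subinterval_real[OF Fn, of c d] that by auto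
  have tel: "cdot v ((G x1 - G x2) *v v) = integral {x1..x2} (\<lambda>y. pairing (outer (w x2) (w x1)) (F y))"
    if t: "0 \<le> x1" "x1 \<le> x2" "x2 \<le> a" for x1 x2
  proof -
    have x1: "x1 \<in> {0..a}" and x2: "x2 \<in> {0..a}" using t by auto
    have "G x2 ** (S x2 - S x1) ** G x1 = G x2 ** S x2 ** G x1 - G x2 ** S x1 ** G x1"
      by (simp only: bilinear_rsub[OF bilinear_mm] bilinear_lsub[OF bilinear_mm])
    also have "\<dots> = G x1 - G x2"
      using inv[OF x1] inv[OF x2] by (simp flip: matrix_mul_assoc)
    finally have GG: "G x1 - G x2 = G x2 ** (S x2 - S x1) ** G x1" by simp
    have D: "S x2 - S x1 = integral {x1..x2} F"
    proof -
      have "integral {0..x1} F + integral {x1..x2} F = integral {0..x2} F"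
        by (rule Henstock_Kurzweil_Integration.integral_combine[OF t(1) t(2) Fsub[OF order_refl t(3)]])
      then show ?thesis using Sint[OF x1] Sint[OF x2] by (simp add: algebra_simps)
    qed
    have "cdot v ((G x1 - G x2) *v v) = cdot v (adjoint_mat (G x2) *v ((S x2 - S x1) *v w x1))"
      unfolding GG hG[OF x2] w_def by (simp add: matrix_vector_mul_assoc matrix_mul_assoc)
    also have "\<dots> = cdot (w x2) ((S x2 - S x1) *v w x1)"
      by (simp add: cdot_adj w_def)
    also have "\<dots> = pairing (outer (w x2) (w x1)) (integral {x1..x2} F)"
      by (simp add: cdot_pairing D)
    also have "\<dots> = integral {x1..x2} (\<lambda>y. pairing (outer (w x2) (w x1)) (F y))"
      using integral_linear[OF Fsub[OF t(1) t(3)] bl_pairing, of "outer (w x2) (w x1)"]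
      by (simp add: o_def)
    finally show ?thesis .
  qed
  obtain Bp where Bp: "Bp > 0" "\<And>(C :: complex^'n^'n) M. norm (pairing C M) \<le> Bp * norm C * norm M"
    using bilinear_bounded_pos[OF bilinear_pairing] by blast
  obtain Bo where Bo: "Bo > 0" "\<And>(p :: complex^'n) q. norm (outer p q) \<le> Bo * norm p * norm q"
    using bilinear_bounded_pos[OF bilinear_outer] by blast
  define W where "W = K * norm v"
  have W: "W \<ge> 0" using K by (simp add: W_def)
  define M where "M = integral {0..a} (\<lambda>y. norm (F y))"
  define T where "T = cdot v ((G 0 - G a) *v v)"
  define I where "I = integral {0..a} phi"
  have main: "norm (T - I) \<le> e * (Bp * (2 * Bo * W) * M)" if e: "e > 0" for e
  proof -
    obtain d where d: "d > 0" "\<And>x y. x \<in> {0..a} \<Longrightarrow> y \<in> {0..a} \<Longrightarrow> \<bar>x - y\<bar> < d \<Longrightarrow> norm (w x - w y) \<le> e"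
      using wuc[OF e] by blast
    define C where "C = Bp * (2 * Bo * W * e)"
    have C: "C \<ge> 0" using Bp Bo W e by (simp add: C_def)
    have est: "norm (cdot v ((G x1 - G x2) *v v) - integral {x1..x2} phi)
                 \<le> C * integral {x1..x2} (\<lambda>y. norm (F y))"
      if t: "0 \<le> x1" "x1 \<le> x2" "x2 \<le> a" "x2 - x1 < d" for x1 x2
    proof -
      have x1: "x1 \<in> {0..a}" and x2: "x2 \<in> {0..a}" using t by auto
      define A where "A = outer (w x2) (w x1)"
      have "cdot v ((G x1 - G x2) *v v) - integral {x1..x2} phi
            = integral {x1..x2} (\<lambda>y. pairing A (F y) - phi y)"
        unfolding tel[OF t(1-3)] A_def
        by (rule integral_diff[symmetric])
           (use integrable_linear[OF Fsub[OF t(1) t(3)] bl_pairing] phii[OF t(1) t(3)] in \<open>auto simp: o_def\<close>)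
      also have "norm \<dots> \<le> integral {x1..x2} (\<lambda>y. C * norm (F y))"
      proof (rule integral_norm_bound_integral)
        show "(\<lambda>y. pairing A (F y) - phi y) integrable_on {x1..x2}"
          using integrable_linear[OF Fsub[OF t(1) t(3)] bl_pairing, of A] phii[OF t(1) t(3)]
          by (intro integrable_diff) (auto simp: o_def)
        show "(\<lambda>y. C * norm (F y)) integrable_on {x1..x2}"
          using Fnsub[OF t(1) t(3)] by (rule integrable_on_mult_right)
      next
        fix y assume y: "y \<in> {x1..x2}"
        then have y': "y \<in> {0..a}" using t by auto
        have e1: "norm (w x2 - w y) \<le> e" using d(2)[OF x2 y'] y t by auto
        have e2: "norm (w x1 - w y) \<le> e" using d(2)[OF x1 y'] y t by auto
        have "A - outer (w y) (w y) = outer (w x2 - w y) (w x1) + outer (w y) (w x1 - w y)"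
          unfolding A_def bilinear_lsub[OF bilinear_outer] bilinear_rsub[OF bilinear_outer] by simp
        then have "norm (A - outer (w y) (w y)) \<le> Bo * norm (w x2 - w y) * norm (w x1) + Bo * norm (w y) * norm (w x1 - w y)"
          by (metis Bo(2) add_mono norm_triangle_le)
        also have "\<dots> \<le> Bo * e * W + Bo * W * e"
          using Bo(1) e1 e2 Wb[OF x1] Wb[OF y'] W e unfolding W_def[symmetric]
          by (intro add_mono mult_mono) auto
        finally have nA: "norm (A - outer (w y) (w y)) \<le> 2 * Bo * W * e" by simp
        have "pairing A (F y) - phi y = pairing (A - outer (w y) (w y)) (F y)"
          unfolding phi_def bilinear_lsub[OF bilinear_pairing] ..
        then have "norm (pairing A (F y) - phi y) \<le> Bp * norm (A - outer (w y) (w y)) * norm (F y)"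
          using Bp(2) by metis
        also have "\<dots> \<le> Bp * (2 * Bo * W * e) * norm (F y)"
          using nA Bp(1) by (intro mult_right_mono mult_left_mono) auto
        finally show "norm (pairing A (F y) - phi y) \<le> C * norm (F y)" by (simp add: C_def)
      qed
      finally show ?thesis by simp
    qed
    define N :: nat where "N = nat (ceiling (a / d)) + 1"
    have N: "N > 0" by (simp add: N_def)
    define x where "x k = a * real k / real N" for k
    have step: "x (Suc k) - x k < d" for k
    proof -
      have "x (Suc k) - x k = a / real N" unfolding x_def by (simp add: diff_divide_distrib[symmetric] distrib_left)
      also have "\<dots> < d"
      proof -
        have "a / d < real N" unfolding N_def by linarith
        then show ?thesis using d(1) N by (simp add: field_simps)
      qed
      finally show ?thesis .
    qed
    have xm: "x k \<le> x (Suc k)" for k using a N by (simp add: x_def field_simps)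
    have x0: "0 \<le> x k" for k using a N by (simp add: x_def)
    have xa: "x k \<le> a" if "k \<le> N" for k
      using a N that by (simp add: x_def field_simps mult_left_mono)
    have ind: "norm (cdot v ((G 0 - G (x k)) *v v) - integral {0..x k} phi)
                 \<le> C * integral {0..x k} (\<lambda>y. norm (F y))" if "k \<le> N" for k
      using that
    proof (induction k)
      case 0
      then show ?case by (simp add: x_def cdot_def)
    next
      case (Suc k)
      have k: "k \<le> N" using Suc.prems by simp
      have xk1: "x (Suc k) \<le> a" by (rule xa[OF Suc.prems])
      have "G 0 - G (x (Suc k)) = (G 0 - G (x k)) + (G (x k) - G (x (Suc k)))" by simp
      then have c1: "cdot v ((G 0 - G (x (Suc k))) *v v) = cdot v ((G 0 - G (x k)) *v v) + cdot v ((G (x k) - G (x (Suc k))) *v v)"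
        by (metis cdot_madd)
      have c2: "integral {0..x (Suc k)} phi = integral {0..x k} phi + integral {x k..x (Suc k)} phi"
        by (rule Henstock_Kurzweil_Integration.integral_combine[OF x0 xm phii[OF order_refl xk1], symmetric])
      have c3: "integral {0..x (Suc k)} (\<lambda>y. norm (F y)) = integral {0..x k} (\<lambda>y. norm (F y)) + integral {x k..x (Suc k)} (\<lambda>y. norm (F y))"
        by (rule Henstock_Kurzweil_Integration.integral_combine[OF x0 xm Fnsub[OF order_refl xk1], symmetric])
      have "norm (cdot v ((G 0 - G (x (Suc k))) *v v) - integral {0..x (Suc k)} phi)
            \<le> norm (cdot v ((G 0 - G (x k)) *v v) - integral {0..x k} phi)
              + norm (cdot v ((G (x k) - G (x (Suc k))) *v v) - integral {x k..x (Suc k)} phi)"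
        unfolding c1 c2 by (rule order_trans[OF _ norm_triangle_ineq]) (simp add: algebra_simps)
      also have "\<dots> \<le> C * integral {0..x k} (\<lambda>y. norm (F y)) + C * integral {x k..x (Suc k)} (\<lambda>y. norm (F y))"
        by (rule add_mono[OF Suc.IH[OF k] est[OF x0 xm xk1 step]])
      finally show ?case unfolding c3 by (simp add: algebra_simps)
    qed
    have "x N = a" using N by (simp add: x_def)
    then have "norm (T - I) \<le> C * M" using ind[of N] by (simp add: T_def I_def M_def)
    then show ?thesis by (simp add: C_def mult_ac)
  qed
  have TI: "T = I"
  proof -
    define Q where "Q = Bp * (2 * Bo * W) * M"
    have Q: "Q \<ge> 0"
      unfolding Q_def M_def using Bp Bo W
      by (intro mult_nonneg_nonneg integral_nonneg Fn) auto
    have "norm (T - I) \<le> 0"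
    proof (rule ccontr)
      assume "\<not> norm (T - I) \<le> 0"
      then have pos: "norm (T - I) > 0" by simp
      define e where "e = norm (T - I) / (Q + 1)"
      have "e > 0" using pos Q by (simp add: e_def)
      then have "norm (T - I) \<le> e * Q" using main unfolding Q_def by blast
      also have "\<dots> < norm (T - I)" using pos Q by (simp add: e_def field_simps)
      finally show False by simp
    qed
    then show ?thesis by simp
  qed
  have "(phi has_integral I) {0..a}"
    unfolding I_def using phii[OF order_refl order_refl] by (simp add: has_integral_integral)
  then have "(phi has_integral T) {0..a}" using TI by simp
  moreover have "phi = (\<lambda>y. cdot (matrix_inv (S y) *v v) (F y *v (matrix_inv (S y) *v v)))"
    by (rule ext) (simp add: phi_def w_def G_def cdot_pairing)
  ultimately show ?thesis unfolding T_def G_def by simp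
qed

lemma bilinear_mm_swap: "bilinear (\<lambda>(Q :: complex^'k^'n) (K :: complex^'n^'m). K ** Q)"
  unfolding bilinear_def
  apply (auto intro!: linearI simp: matrix_matrix_mult_def vec_eq_iff algebra_simps sum.distrib vector_scaleR_component sum_distrib_left)
  by (simp_all add: scaleR_conv_of_real algebra_simps sum_distrib_left)

lemma continuous_on_mm_const:
  assumes "continuous_on S (f :: real \<Rightarrow> complex^'n^'m)"
  shows "continuous_on S (\<lambda>y. f y ** (J :: complex^'k^'n))"
  by (rule bilinear_continuous_on_compose[OF assms continuous_on_const bilinear_mm])

lemma continuous_on_adj:
  assumes "continuous_on S (f :: real \<Rightarrow> complex^'n^'m)"
  shows "continuous_on S (\<lambda>y. adjoint_mat (f y))"
  using linear_continuous_on_compose[OF assms linear_adj] .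

theorem proposition7p2:
  fixes ell :: ereal
    and J :: "complex^'m^'m"
    and H1 H0 :: "real \<Rightarrow> complex^'m^'m"
    and A :: "complex^'n^'n"
    and Pm :: "real \<Rightarrow> complex^'m^'n"
    and S :: "real \<Rightarrow> complex^'n^'n"
    and h :: "complex^'n"
    and a t :: real
  assumes ell_pos: "0 < ell"
    and J_skew: "adjoint_mat J = - J"
    and H1_nonneg: "\<And>x. 0 \<le> x \<Longrightarrow> ereal x < ell \<Longrightarrow> psd_mat (H1 x)"
    and H0_herm: "\<And>x. 0 \<le> x \<Longrightarrow> ereal x < ell \<Longrightarrow> hermitian_mat (H0 x)"
    and H1_loc: "\<And>b. 0 \<le> b \<Longrightarrow> ereal b < ell \<Longrightarrow> H1 absolutely_integrable_on {0..b}"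
    and H0_loc: "\<And>b. 0 \<le> b \<Longrightarrow> ereal b < ell \<Longrightarrow> H0 absolutely_integrable_on {0..b}"
    and S0_pos: "pd_mat (S 0)"
    and identity0: "A ** S 0 - S 0 ** adjoint_mat A = Pm 0 ** J ** adjoint_mat (Pm 0)"
    and Pi_eq: "\<And>x. 0 \<le> x \<Longrightarrow> ereal x < ell \<Longrightarrow>
       ((\<lambda>y. - (A ** Pm y ** J ** H1 y) - Pm y ** J ** H0 y) has_integral (Pm x - Pm 0)) {0..x}"
    and S_eq: "\<And>x. 0 \<le> x \<Longrightarrow> ereal x < ell \<Longrightarrow>
       ((\<lambda>y. Pm y ** J ** H1 y ** adjoint_mat J ** adjoint_mat (Pm y)) has_integral (S x - S 0)) {0..x}"
    and a_pos: "0 < a" and a_lt: "ereal a < ell"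
  shows
    "(let z = (\<lambda>x s. J ** adjoint_mat (Pm x) ** matrix_inv (S x) ** mat_exp ((- s) *\<^sub>R A) *v h);
          E = (\<lambda>s. sqrt (Re (integral {0..a} (\<lambda>x. cdot (z x s) (H1 x *v z x s))))) in
      E t = sqrt (Re (cdot h (mat_exp ((- t) *\<^sub>R adjoint_mat A) **
                     (matrix_inv (S 0) - matrix_inv (S a)) ** mat_exp ((- t) *\<^sub>R A) *v h))))"
proof -
  have inell: "0 \<le> x" "ereal x < ell" if "x \<in> {0..a}" for x
  proof -
    show "0 \<le> x" using that by auto
    have "ereal x \<le> ereal a" using that by auto
    then show "ereal x < ell" using a_lt by (rule le_less_trans)
  qed
  define X where "X y = Pm y ** J" for y
  define F where "F y = X y ** H1 y ** adjoint_mat (X y)" for y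
  have Feq: "F = (\<lambda>y. Pm y ** J ** H1 y ** adjoint_mat J ** adjoint_mat (Pm y))"
    by (rule ext) (simp add: F_def X_def adj_mult matrix_mul_assoc)
  have Shas: "(F has_integral (S x - S 0)) {0..x}" if "x \<in> {0..a}" for x
    unfolding Feq using S_eq inell[OF that] by blast
  define g where "g y = - (A ** Pm y ** J ** H1 y) - Pm y ** J ** H0 y" for y
  have gi: "g integrable_on {0..a}"
    using Pi_eq[OF _ a_lt] a_pos unfolding g_def by (auto simp: integrable_on_def)
  have Pmint: "Pm x = Pm 0 + integral {0..x} g" if "x \<in> {0..a}" for x
    using Pi_eq[OF inell[OF that]] unfolding g_def[symmetric] by (simp add: integral_unique)
  have cPm: "continuous_on {0..a} Pm"
  proof (rule continuous_on_eq)
    show "continuous_on {0..a} (\<lambda>x. Pm 0 + integral {0..x} g)"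
      by (rule continuous_on_add[OF continuous_on_const indefinite_integral_continuous_1[OF gi]])
  qed (metis Pmint)
  have cX: "continuous_on {0..a} X"
    unfolding X_def by (rule continuous_on_mm_const[OF cPm])
  have cXa: "continuous_on {0..a} (\<lambda>y. adjoint_mat (X y))"
    by (rule continuous_on_adj[OF cX])
  have H1i: "H1 absolutely_integrable_on {0..a}"
    using H1_loc a_pos a_lt by auto
  have XH: "(\<lambda>y. X y ** H1 y) absolutely_integrable_on {0..a}"
    by (rule absolutely_integrable_bounded_measurable_product[OF bilinear_mm
          continuous_imp_measurable_on_sets_lebesgue[OF cX] _
          compact_imp_bounded[OF compact_continuous_image[OF cX compact_Icc]] H1i]) auto
  have Fint: "F absolutely_integrable_on {0..a}"
    unfolding F_def
    using absolutely_integrable_bounded_measurable_product[OF bilinear_mm_swap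
          continuous_imp_measurable_on_sets_lebesgue[OF cXa] _
          compact_imp_bounded[OF compact_continuous_image[OF cXa compact_Icc]] XH]
    by auto
  have Fpsd: "0 \<le> Re (cdot u (F y *v u))" if "y \<in> {0..a}" for y u
  proof -
    have "cdot u (F y *v u) = cdot (adjoint_mat (X y) *v u) (H1 y *v (adjoint_mat (X y) *v u))"
      by (simp add: F_def cdot_adj' matrix_vector_mul_assoc matrix_mul_assoc)
    then show ?thesis using H1_nonneg[OF inell[OF that]] unfolding psd_mat_def by simp
  qed
  have Fherm: "adjoint_mat (F y) = F y" if "y \<in> {0..a}" for y
  proof -
    have "adjoint_mat (H1 y) = H1 y"
      using H1_nonneg[OF inell[OF that]] unfolding psd_mat_def hermitian_mat_def by simp
    then show ?thesis by (simp add: F_def adj_mult matrix_mul_assoc)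
  qed
  define E where "E = mat_exp ((- t) *\<^sub>R A)"
  define v where "v = E *v h"
  have core_res: "((\<lambda>y. cdot (matrix_inv (S y) *v v) (F y *v (matrix_inv (S y) *v v))) has_integral
          cdot v ((matrix_inv (S 0) - matrix_inv (S a)) *v v)) {0..a}"
    by (rule core[OF _ Fint Shas Fpsd Fherm S0_pos]) (use a_pos in auto)
  have pw: "cdot (J ** adjoint_mat (Pm x) ** matrix_inv (S x) ** E *v h)
                 (H1 x *v (J ** adjoint_mat (Pm x) ** matrix_inv (S x) ** E *v h))
          = cdot (matrix_inv (S x) *v v) (F x *v (matrix_inv (S x) *v v))" for x
  proof -
    define wv where "wv = matrix_inv (S x) *v v"
    define r where "r = adjoint_mat (Pm x) *v wv"
    have z: "J ** adjoint_mat (Pm x) ** matrix_inv (S x) ** E *v h = J *v r"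
      by (simp add: r_def wv_def v_def matrix_vector_mul_assoc matrix_mul_assoc)
    have Jm: "J = - adjoint_mat J" using J_skew by simp
    have "cdot (J *v r) (H1 x *v (J *v r)) = cdot r (adjoint_mat J *v (H1 x *v (J *v r)))"
      by (simp add: cdot_adj)
    also have "adjoint_mat J *v (H1 x *v (J *v r)) = J *v (H1 x *v (adjoint_mat J *v r))"
    proof -
      have "adjoint_mat J *v (H1 x *v (J *v r)) = (- J) *v (H1 x *v ((- adjoint_mat J) *v r))"
        using J_skew Jm by simp
      also have "\<dots> = J *v (H1 x *v (adjoint_mat J *v r))"
        by (simp add: matrix_vector_mult_def vec_eq_iff sum_negf)
      finally show ?thesis .
    qed
    also have "cdot r (J *v (H1 x *v (adjoint_mat J *v r))) = cdot wv (F x *v wv)"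
      by (simp add: r_def F_def X_def cdot_adj' matrix_vector_mul_assoc adj_mult matrix_mul_assoc)
    finally show ?thesis using z by (simp add: wv_def)
  qed
  have rhs: "cdot h (mat_exp ((- t) *\<^sub>R adjoint_mat A) ** (matrix_inv (S 0) - matrix_inv (S a)) ** E *v h)
           = cdot v ((matrix_inv (S 0) - matrix_inv (S a)) *v v)"
  proof -
    have "mat_exp ((- t) *\<^sub>R adjoint_mat A) = adjoint_mat E"
      by (simp add: E_def adj_mat_exp adj_scaleR adj_minus)
    then show ?thesis by (simp add: v_def cdot_adj matrix_vector_mul_assoc[symmetric])
  qed
  have "integral {0..a} (\<lambda>x. cdot (J ** adjoint_mat (Pm x) ** matrix_inv (S x) ** E *v h)
                 (H1 x *v (J ** adjoint_mat (Pm x) ** matrix_inv (S x) ** E *v h)))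
        = cdot v ((matrix_inv (S 0) - matrix_inv (S a)) *v v)"
    unfolding pw using core_res by (simp add: integral_unique)
  then show ?thesis unfolding Let_def E_def[symmetric] rhs by simp
qed

end
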